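(* Let $G$ be a finite group and $f\in\mathrm{Aut}(G)$ such that $\mathrm{GAlex}(G,f)$ is connected. If $\mathrm{GAlex}(G,f)\cong\Lambda\times_\phi Q$ for some quandle $Q$, group $\Lambda$ and function $\phi:Q\times Q\to\Lambda$ with $|\Lambda|=|\mathrm{Fix}(G,f)|$, then $\Lambda\cong\mathrm{Fix}(G,f)$ as groups. Hence if $\mathrm{Fix}(G,f)$ is not abelian, then $\Lambda\times_\phi Q$ is not an abelian extension of $Q$.
   Context: A quandle is a set with operation $*$ satisfying $a*a=a$; unique right division; $(a*b)*c=(a*c)*(b*c)$. Connected means the group generated by the right translations $R_a(y)=y*a$ acts transitively. $\mathrm{GAlex}(G,f)$ is the quandle on $G$ with $a*b=f(ab^{-1})b$; $\mathrm{Fix}(G,f)=\{x\in G: f(x)=x\}$. For a group $\Lambda$ and $\phi:Q\times Q\to\Lambda$, $\Lambda\times_\phi Q$ is $\Lambda\times Q$ with $(\lambda,a)*(\mu,b)=(\lambda\phi(a,b),a*b)$, assumed to be a quandle; it is called an abelian extension of $Q$ when $\Lambda$ is abelian. *)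

theory Defs
  imports "HOL-Algebra.Algebra"
begin

definition quandle :: "'q set \<Rightarrow> ('q \<Rightarrow> 'q \<Rightarrow> 'q) \<Rightarrow> bool" where
  "quandle Q op \<longleftrightarrow>
     (\<forall>a\<in>Q. \<forall>b\<in>Q. op a b \<in> Q) \<and>
     (\<forall>a\<in>Q. op a a = a) \<and>
     (\<forall>a\<in>Q. \<forall>b\<in>Q. \<exists>!c. c \<in> Q \<and> op c b = a) \<and>
     (\<forall>a\<in>Q. \<forall>b\<in>Q. \<forall>c\<in>Q. op (op a b) c = op (op a c) (op b c))"

definition right_transl :: "'q set \<Rightarrow> ('q \<Rightarrow> 'q \<Rightarrow> 'q) \<Rightarrow> 'q \<Rightarrow> ('q \<Rightarrow> 'q)" where
  "right_transl Q op a = (\<lambda>y\<in>Q. op y a)"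

definition inn_group :: "'q set \<Rightarrow> ('q \<Rightarrow> 'q \<Rightarrow> 'q) \<Rightarrow> ('q \<Rightarrow> 'q) set" where
  "inn_group Q op = generate (BijGroup Q) (right_transl Q op ` Q)"

definition connected_quandle :: "'q set \<Rightarrow> ('q \<Rightarrow> 'q \<Rightarrow> 'q) \<Rightarrow> bool" where
  "connected_quandle Q op \<longleftrightarrow> quandle Q op \<and>
     (\<forall>x\<in>Q. \<forall>y\<in>Q. \<exists>g\<in>inn_group Q op. g x = y)"

definition galex_op :: "('g, 'b) monoid_scheme \<Rightarrow> ('g \<Rightarrow> 'g) \<Rightarrow> 'g \<Rightarrow> 'g \<Rightarrow> 'g" where
  "galex_op G f a b = f (a \<otimes>\<^bsub>G\<^esub> inv\<^bsub>G\<^esub> b) \<otimes>\<^bsub>G\<^esub> b"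

definition Fix :: "('g, 'b) monoid_scheme \<Rightarrow> ('g \<Rightarrow> 'g) \<Rightarrow> 'g set" where
  "Fix G f = {x \<in> carrier G. f x = x}"

definition ext_op :: "('l, 'c) monoid_scheme \<Rightarrow> ('q \<Rightarrow> 'q \<Rightarrow> 'l) \<Rightarrow> ('q \<Rightarrow> 'q \<Rightarrow> 'q)
                       \<Rightarrow> ('l \<times> 'q) \<Rightarrow> ('l \<times> 'q) \<Rightarrow> ('l \<times> 'q)" where
  "ext_op L phi op x y = (fst x \<otimes>\<^bsub>L\<^esub> phi (snd x) (snd y), op (snd x) (snd y))"

definition quandle_iso :: "'a set \<Rightarrow> ('a \<Rightarrow> 'a \<Rightarrow> 'a) \<Rightarrow> 'b set \<Rightarrow> ('b \<Rightarrow> 'b \<Rightarrow> 'b) \<Rightarrow> bool" where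
  "quandle_iso A opA B opB \<longleftrightarrow>
     (\<exists>h. bij_betw h A B \<and> (\<forall>a\<in>A. \<forall>b\<in>A. h (opA a b) = opB (h a) (h b)))"

end

theory Submission
  imports Defs
begin

lemma rt_Bij:
  assumes q: "quandle Q op" and a: "a \<in> Q"
  shows "right_transl Q op a \<in> Bij Q"
proof -
  have cl: "\<forall>x\<in>Q. \<forall>y\<in>Q. op x y \<in> Q" and ud: "\<forall>x\<in>Q. \<forall>y\<in>Q. \<exists>!c. c \<in> Q \<and> op c y = x"
    using q unfolding quandle_def by auto
  have inj: "inj_on (\<lambda>y. op y a) Q"
  proof (rule inj_onI)
    fix x y assume "x \<in> Q" "y \<in> Q" "op x a = op y a"
    with ud cl a show "x = y" by metis
  qed
  have "(\<lambda>y. op y a) ` Q = Q"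
  proof
    show "(\<lambda>y. op y a) ` Q \<subseteq> Q" using cl a by auto
    show "Q \<subseteq> (\<lambda>y. op y a) ` Q"
    proof
      fix x assume "x \<in> Q"
      then obtain c where "c \<in> Q" "op c a = x" using ud a by blast
      then show "x \<in> (\<lambda>y. op y a) ` Q" by auto
    qed
  qed
  with inj have "bij_betw (\<lambda>y. op y a) Q Q" by (simp add: bij_betw_def)
  then have "bij_betw (right_transl Q op a) Q Q"
    unfolding right_transl_def by (rule bij_betw_cong[THEN iffD1, rotated]) auto
  then show ?thesis unfolding Bij_def right_transl_def by auto
qed

lemma comm_inn:
  assumes q: "quandle Q op" and T: "\<And>x. x \<in> Q \<Longrightarrow> T x \<in> Q"
    and Tc: "\<And>x y. x \<in> Q \<Longrightarrow> y \<in> Q \<Longrightarrow> T (op x y) = op (T x) y"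
    and p: "p \<in> inn_group Q op"
  shows "p \<in> Bij Q \<and> (\<forall>x\<in>Q. T (p x) = p (T x))"
  using p unfolding inn_group_def
proof (induction rule: generate.induct)
  case one
  have A: "\<one>\<^bsub>BijGroup Q\<^esub> \<in> Bij Q"
    using group.is_monoid[OF group_BijGroup, of Q] monoid.one_closed unfolding BijGroup_def by force
  have B: "\<one>\<^bsub>BijGroup Q\<^esub> = (\<lambda>x\<in>Q. x)" unfolding BijGroup_def by simp
  show ?case
  proof (intro conjI ballI)
    show "\<one>\<^bsub>BijGroup Q\<^esub> \<in> Bij Q" by (fact A)
    fix x assume "x \<in> Q" then show "T (\<one>\<^bsub>BijGroup Q\<^esub> x) = \<one>\<^bsub>BijGroup Q\<^esub> (T x)"
      using B T by simp
  qed
next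
  case (incl h)
  then obtain a where a: "a \<in> Q" "h = right_transl Q op a" by auto
  show ?case
  proof (intro conjI ballI)
    show "h \<in> Bij Q" using rt_Bij[OF q a(1)] a(2) by simp
    fix x assume "x \<in> Q" then show "T (h x) = h (T x)" using a Tc T by (simp add: right_transl_def)
  qed
next
  case (inv h)
  then obtain a where a: "a \<in> Q" "h = right_transl Q op a" by auto
  have hB: "h \<in> Bij Q" using rt_Bij[OF q a(1)] a by simp
  have bb: "bij_betw h Q Q" using hB by (simp add: Bij_def)
  have hc: "\<forall>x\<in>Q. T (h x) = h (T x)" using a Tc T by (simp add: right_transl_def)
  have "\<forall>x\<in>Q. T (inv_into Q h x) = inv_into Q h (T x)"
  proof
    fix x assume x: "x \<in> Q"
    define z where "z = inv_into Q h x"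
    have z: "z \<in> Q" "h z = x" using bb x unfolding z_def
      by (auto simp: bij_betw_def inv_into_into f_inv_into_f)
    have "T x = h (T z)" using hc z by metis
    then have "inv_into Q h (T x) = T z"
      using bb T[OF z(1)] by (simp add: bij_betw_def inv_into_f_f)
    then show "T (inv_into Q h x) = inv_into Q h (T x)" unfolding z_def by simp
  qed
  note ic = this
  show ?case
  proof (intro conjI ballI)
    show "inv\<^bsub>BijGroup Q\<^esub> h \<in> Bij Q"
      unfolding inv_BijGroup[OF hB] by (rule restrict_inv_into_Bij[OF hB])
    fix x assume "x \<in> Q" then show "T ((inv\<^bsub>BijGroup Q\<^esub> h) x) = (inv\<^bsub>BijGroup Q\<^esub> h) (T x)"
      using ic T by (simp add: inv_BijGroup[OF hB])
  qed
next
  case (eng h1 h2)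
  have b1: "h1 \<in> Bij Q" and b2: "h2 \<in> Bij Q" using eng.IH by auto
  have c1: "\<forall>x\<in>Q. T (h1 x) = h1 (T x)" and c2: "\<forall>x\<in>Q. T (h2 x) = h2 (T x)" using eng.IH by auto
  have m: "h1 \<otimes>\<^bsub>BijGroup Q\<^esub> h2 = compose Q h1 h2" using b1 b2 by (simp add: BijGroup_def)
  have h2Q: "\<And>x. x \<in> Q \<Longrightarrow> h2 x \<in> Q" using b2 by (auto simp: Bij_def bij_betw_def)
  show ?case
  proof (intro conjI ballI)
    show "h1 \<otimes>\<^bsub>BijGroup Q\<^esub> h2 \<in> Bij Q" unfolding m by (rule compose_Bij[OF b1 b2])
    fix x assume x: "x \<in> Q"
    show "T ((h1 \<otimes>\<^bsub>BijGroup Q\<^esub> h2) x) = (h1 \<otimes>\<^bsub>BijGroup Q\<^esub> h2) (T x)"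
      unfolding m using x T[OF x] c1 c2 h2Q by (simp add: compose_def)
  qed
qed

theorem mainTheorem15:
  fixes G :: "'g monoid" and f :: "'g \<Rightarrow> 'g"
    and L :: "'l monoid" and Q :: "'q set" and op :: "'q \<Rightarrow> 'q \<Rightarrow> 'q"
    and phi :: "'q \<Rightarrow> 'q \<Rightarrow> 'l"
  assumes "group G" and "finite (carrier G)"
    and "f \<in> hom G G" and "bij_betw f (carrier G) (carrier G)"
    and "connected_quandle (carrier G) (galex_op G f)"
    and "group L" and "quandle Q op"
    and "\<forall>a\<in>Q. \<forall>b\<in>Q. phi a b \<in> carrier L"
    and "quandle (carrier L \<times> Q) (ext_op L phi op)"
    and "quandle_iso (carrier G) (galex_op G f) (carrier L \<times> Q) (ext_op L phi op)"
    and "card (carrier L) = card (Fix G f)"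
  shows "L \<cong> G\<lparr>carrier := Fix G f\<rparr>
         \<and> (\<not> comm_group (G\<lparr>carrier := Fix G f\<rparr>) \<longrightarrow> \<not> comm_group L)"
proof -
  interpret G: group G by fact
  interpret L: group L by fact
  interpret fh: group_hom G G f using assms(1,3) by (simp add: group_hom_def group_hom_axioms_def)
  let ?X = "carrier G"
  let ?g = "galex_op G f"
  have qG: "quandle ?X ?g" using assms(5) by (simp add: connected_quandle_def)
  have gcl: "\<And>x y. x \<in> ?X \<Longrightarrow> y \<in> ?X \<Longrightarrow> ?g x y \<in> ?X"
    using qG by (simp add: quandle_def)
  obtain h where hb: "bij_betw h ?X (carrier L \<times> Q)"
    and hh: "\<forall>a\<in>?X. \<forall>b\<in>?X. h (?g a b) = ext_op L phi op (h a) (h b)"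
    using assms(10) unfolding quandle_iso_def by blast
  have hX: "\<And>x. x \<in> ?X \<Longrightarrow> h x \<in> carrier L \<times> Q" using hb by (auto simp: bij_betw_def)
  define T where "T = (\<lambda>\<mu> x. inv_into ?X h (\<mu> \<otimes>\<^bsub>L\<^esub> fst (h x), snd (h x)))"
  have TX: "\<And>\<mu> x. \<mu> \<in> carrier L \<Longrightarrow> x \<in> ?X \<Longrightarrow> T \<mu> x \<in> ?X"
  proof -
    fix \<mu> x assume "\<mu> \<in> carrier L" "x \<in> ?X"
    then have "(\<mu> \<otimes>\<^bsub>L\<^esub> fst (h x), snd (h x)) \<in> h ` ?X"
      using hX[of x] hb by (auto simp: bij_betw_def mem_Times_iff)
    then show "T \<mu> x \<in> ?X" unfolding T_def by (rule inv_into_into)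
  qed
  have hT: "\<And>\<mu> x. \<mu> \<in> carrier L \<Longrightarrow> x \<in> ?X \<Longrightarrow> h (T \<mu> x) = (\<mu> \<otimes>\<^bsub>L\<^esub> fst (h x), snd (h x))"
  proof -
    fix \<mu> x assume "\<mu> \<in> carrier L" "x \<in> ?X"
    then have "(\<mu> \<otimes>\<^bsub>L\<^esub> fst (h x), snd (h x)) \<in> h ` ?X"
      using hX[of x] hb by (auto simp: bij_betw_def mem_Times_iff)
    then show "h (T \<mu> x) = (\<mu> \<otimes>\<^bsub>L\<^esub> fst (h x), snd (h x))" unfolding T_def by (rule f_inv_into_f)
  qed
  have hinj: "\<And>x y. x \<in> ?X \<Longrightarrow> y \<in> ?X \<Longrightarrow> h x = h y \<Longrightarrow> x = y"
    using hb by (auto simp: bij_betw_def inj_on_def)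
  have Tc: "\<And>\<mu> x y. \<mu> \<in> carrier L \<Longrightarrow> x \<in> ?X \<Longrightarrow> y \<in> ?X \<Longrightarrow> T \<mu> (?g x y) = ?g (T \<mu> x) y"
  proof -
    fix \<mu> x y assume m: "\<mu> \<in> carrier L" and x: "x \<in> ?X" and y: "y \<in> ?X"
    have ph: "phi (snd (h x)) (snd (h y)) \<in> carrier L" using assms(8) hX[OF x] hX[OF y] by auto
    have fx: "fst (h x) \<in> carrier L" using hX[OF x] by auto
    have "h (T \<mu> (?g x y)) = h (?g (T \<mu> x) y)"
      using hT[OF m gcl[OF x y]] hh x y TX[OF m x] hT[OF m x] ph fx m
      by (simp add: ext_op_def L.m_assoc)
    then show "T \<mu> (?g x y) = ?g (T \<mu> x) y"
      using hinj TX[OF m] gcl x y by blast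
  qed
  have one: "\<one>\<^bsub>G\<^esub> \<in> ?X" by simp
  have f1: "f \<one>\<^bsub>G\<^esub> = \<one>\<^bsub>G\<^esub>" by simp
  have g11: "?g \<one>\<^bsub>G\<^esub> \<one>\<^bsub>G\<^esub> = \<one>\<^bsub>G\<^esub>" by (simp add: galex_op_def)
  have gx1: "\<And>x. x \<in> ?X \<Longrightarrow> ?g x \<one>\<^bsub>G\<^esub> = f x" by (simp add: galex_op_def)
  have Lc: "\<And>c p x. c \<in> Fix G f \<Longrightarrow> p \<in> inn_group ?X ?g \<Longrightarrow> x \<in> ?X \<Longrightarrow> c \<otimes>\<^bsub>G\<^esub> p x = p (c \<otimes>\<^bsub>G\<^esub> x)"
  proof -
    fix c p x assume c: "c \<in> Fix G f" and p: "p \<in> inn_group ?X ?g" and x: "x \<in> ?X"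
    have cX: "c \<in> ?X" and fc: "f c = c" using c by (auto simp: Fix_def)
    have e: "\<And>a b. a \<in> ?X \<Longrightarrow> b \<in> ?X \<Longrightarrow> c \<otimes>\<^bsub>G\<^esub> ?g a b = ?g (c \<otimes>\<^bsub>G\<^esub> a) b"
      using cX fc by (simp add: galex_op_def G.m_assoc fh.hom_mult)
    have "p \<in> Bij ?X \<and> (\<forall>x\<in>?X. c \<otimes>\<^bsub>G\<^esub> p x = p (c \<otimes>\<^bsub>G\<^esub> x))"
      by (rule comm_inn[OF qG _ _ p]) (use cX e in auto)
    with x show "c \<otimes>\<^bsub>G\<^esub> p x = p (c \<otimes>\<^bsub>G\<^esub> x)" by auto
  qed
  define c where "c = (\<lambda>\<mu>. T \<mu> \<one>\<^bsub>G\<^esub>)"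
  have cX: "\<And>\<mu>. \<mu> \<in> carrier L \<Longrightarrow> c \<mu> \<in> ?X" unfolding c_def using TX one by blast
  have cF: "\<And>\<mu>. \<mu> \<in> carrier L \<Longrightarrow> c \<mu> \<in> Fix G f"
  proof -
    fix \<mu> assume m: "\<mu> \<in> carrier L"
    have "c \<mu> = T \<mu> (?g \<one>\<^bsub>G\<^esub> \<one>\<^bsub>G\<^esub>)" unfolding c_def using g11 by simp
    also have "\<dots> = f (c \<mu>)" using Tc[OF m one one] gx1 cX[OF m] unfolding c_def by simp
    finally show "c \<mu> \<in> Fix G f" using cX[OF m] by (simp add: Fix_def)
  qed
  have Tform: "\<And>\<mu> x. \<mu> \<in> carrier L \<Longrightarrow> x \<in> ?X \<Longrightarrow> T \<mu> x = c \<mu> \<otimes>\<^bsub>G\<^esub> x"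
  proof -
    fix \<mu> x assume m: "\<mu> \<in> carrier L" and x: "x \<in> ?X"
    obtain p where p: "p \<in> inn_group ?X ?g" "p \<one>\<^bsub>G\<^esub> = x"
      using assms(5) x one unfolding connected_quandle_def by blast
    have "T \<mu> x = p (T \<mu> \<one>\<^bsub>G\<^esub>)"
      using comm_inn[OF qG TX[OF m] Tc[OF m] p(1)] p(2) one by metis
    also have "\<dots> = p (c \<mu> \<otimes>\<^bsub>G\<^esub> \<one>\<^bsub>G\<^esub>)" using cX[OF m] unfolding c_def by simp
    also have "\<dots> = c \<mu> \<otimes>\<^bsub>G\<^esub> x" using Lc[OF cF[OF m] p(1) one] p(2) by simp
    finally show "T \<mu> x = c \<mu> \<otimes>\<^bsub>G\<^esub> x" .
  qed
  have h1: "h \<one>\<^bsub>G\<^esub> \<in> carrier L \<times> Q" using hX one .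
  have cmult: "\<And>\<mu> \<nu>. \<mu> \<in> carrier L \<Longrightarrow> \<nu> \<in> carrier L \<Longrightarrow> c (\<mu> \<otimes>\<^bsub>L\<^esub> \<nu>) = c \<mu> \<otimes>\<^bsub>G\<^esub> c \<nu>"
  proof -
    fix \<mu> \<nu> assume m: "\<mu> \<in> carrier L" and n: "\<nu> \<in> carrier L"
    have "c \<mu> \<otimes>\<^bsub>G\<^esub> c \<nu> = T \<mu> (T \<nu> \<one>\<^bsub>G\<^esub>)" using Tform[OF m cX[OF n]] unfolding c_def by simp
    also have "\<dots> = T (\<mu> \<otimes>\<^bsub>L\<^esub> \<nu>) \<one>\<^bsub>G\<^esub>"
      using hT[OF n one] h1 m n unfolding T_def by (auto simp: L.m_assoc mem_Times_iff)
    finally show "c (\<mu> \<otimes>\<^bsub>L\<^esub> \<nu>) = c \<mu> \<otimes>\<^bsub>G\<^esub> c \<nu>" unfolding c_def by simp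
  qed
  have cinj: "inj_on c (carrier L)"
  proof (rule inj_onI)
    fix \<mu> \<nu> assume m: "\<mu> \<in> carrier L" and n: "\<nu> \<in> carrier L" and e: "c \<mu> = c \<nu>"
    then have "h (T \<mu> \<one>\<^bsub>G\<^esub>) = h (T \<nu> \<one>\<^bsub>G\<^esub>)" unfolding c_def by simp
    then have "\<mu> \<otimes>\<^bsub>L\<^esub> fst (h \<one>\<^bsub>G\<^esub>) = \<nu> \<otimes>\<^bsub>L\<^esub> fst (h \<one>\<^bsub>G\<^esub>)" using hT[OF m one] hT[OF n one] by simp
    then show "\<mu> = \<nu>" using m n h1 by (metis L.r_cancel mem_Times_iff)
  qed
  have finF: "finite (Fix G f)" using assms(2) by (simp add: Fix_def)
  have cimg: "c ` carrier L = Fix G f"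
  proof (rule card_subset_eq[OF finF])
    show "c ` carrier L \<subseteq> Fix G f" using cF by auto
    show "card (c ` carrier L) = card (Fix G f)" using card_image[OF cinj] assms(11) by simp
  qed
  have cb: "bij_betw c (carrier L) (Fix G f)" using cinj cimg by (simp add: bij_betw_def)
  have ciso: "c \<in> iso L (G\<lparr>carrier := Fix G f\<rparr>)"
    by (rule isoI) (auto simp: hom_def cF cmult cb)
  have part1: "L \<cong> G\<lparr>carrier := Fix G f\<rparr>" using ciso by (rule is_isoI)
  have sub: "subgroup (Fix G f) G"
    by (rule G.subgroupI) (auto simp: Fix_def fh.hom_mult)
  have grpF: "group (G\<lparr>carrier := Fix G f\<rparr>)" using subgroup.subgroup_is_group[OF sub assms(1)] .
  have part2: "comm_group L \<Longrightarrow> comm_group (G\<lparr>carrier := Fix G f\<rparr>)"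
  proof (rule group.group_comm_groupI[OF grpF])
    fix x y assume cL: "comm_group L" and x: "x \<in> carrier (G\<lparr>carrier := Fix G f\<rparr>)"
      and y: "y \<in> carrier (G\<lparr>carrier := Fix G f\<rparr>)"
    obtain \<mu> where m: "\<mu> \<in> carrier L" "x = c \<mu>"
    proof -
      have "x \<in> c ` carrier L" using x cimg by simp
      then show ?thesis using that by blast
    qed
    obtain \<nu> where n: "\<nu> \<in> carrier L" "y = c \<nu>"
    proof -
      have "y \<in> c ` carrier L" using y cimg by simp
      then show ?thesis using that by blast
    qed
    have "\<mu> \<otimes>\<^bsub>L\<^esub> \<nu> = \<nu> \<otimes>\<^bsub>L\<^esub> \<mu>" using cL m n by (simp add: comm_group.axioms(1) comm_monoid.m_comm)
    then show "x \<otimes>\<^bsub>G\<lparr>carrier := Fix G f\<rparr>\<^esub> y = y \<otimes>\<^bsub>G\<lparr>carrier := Fix G f\<rparr>\<^esub> x"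
      using cmult[OF m(1) n(1)] cmult[OF n(1) m(1)] m n by simp
  qed
  show ?thesis using part1 part2 by blast
qed

end
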